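(* Let $d\in\mathbb{N}$ with $d\ge 2$ and $0<\eta<1/d$. Then $E_+(1+1/\eta)\subseteq \mathcal{D}(\eta)^c\setminus K_d^c$.
   Context: For $\boldsymbol{x}\in\mathbb{R}^d$, $|\boldsymbol{x}|=\max_i|x_i|$; $\|x\|$ denotes distance from $x\in\mathbb{R}$ to the nearest integer, and for vectors $\|\boldsymbol{x}\|=\min_{\boldsymbol{p}\in\mathbb{Z}^d}|\boldsymbol{x}-\boldsymbol{p}|$. $\boldsymbol{r}\boldsymbol{\alpha}$ is the standard inner product. For $\boldsymbol{\alpha}\in\mathbb{R}^d$, $\mathcal{A}_\eta(\boldsymbol{\alpha})$ is the set of accumulation points of $\{|q|^{\eta}(q\boldsymbol{\alpha}-\boldsymbol{p}):q\in\mathbb{Z}\setminus\{0\},\ \boldsymbol{p}\in\mathbb{Z}^d\}$, $\mathcal{D}(\eta)=\{\boldsymbol{\alpha}:\mathcal{A}_\eta(\boldsymbol{\alpha})=\mathbb{R}^d\}$, $\mathcal{D}(\eta)^c=\mathbb{R}^d\setminus\mathcal{D}(\eta)$. $K_d$ is the set of $\boldsymbol{\alpha}\in\mathbb{R}^d$ with $1,\alpha_1,\dots,\alpha_d$ linearly independent over $\mathbb{Q}$, $K_d^c=\mathbb{R}^d\setminus K_d$. For $\omega\ge d$, \[E_+(\omega)=\left\{\boldsymbol{\alpha}\in K_d:\lim_{R\to\infty}R^\omega\min\{\|\boldsymbol{r}\boldsymbol{\alpha}\|:\boldsymbol{r}\in\mathbb{Z}^d\setminus\{\boldsymbol{0}\},\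 0\le r_1,\ldots,r_d\le R\}=0\right\}.\] *)

theory Defs
  imports "HOL-Analysis.Analysis"
begin

text \<open>Vectors in R^d are rendered as real^'n with d = CARD('n).\<close>

definition int_vec :: "(real^'n) \<Rightarrow> bool" where
  "int_vec p \<longleftrightarrow> (\<forall>i. p $ i \<in> \<int>)"

definition dist_int :: "real \<Rightarrow> real" where
  "dist_int x = Inf {\<bar>x - of_int k\<bar> | k::int. True}"

definition A_eta :: "real \<Rightarrow> real^'n \<Rightarrow> (real^'n) set" where
  "A_eta eta alpha =
     {x. x islimpt {(real_of_int \<bar>q\<bar> powr eta) *\<^sub>R (of_int q *\<^sub>R alpha - p)
                   | q p. q \<noteq> 0 \<and> int_vec p}}"

definition D_eta :: "real \<Rightarrow> (real^'n) set" where
  "D_eta eta = {alpha. A_eta eta alpha = UNIV}"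

definition K_set :: "(real^'n) set" where
  "K_set = {alpha. \<forall>(c0::real) (c::'n \<Rightarrow> real). c0 \<in> \<rat> \<and> (\<forall>i. c i \<in> \<rat>) \<and>
              c0 + (\<Sum>i\<in>UNIV. c i * alpha $ i) = 0 \<longrightarrow> c0 = 0 \<and> (\<forall>i. c i = 0)}"

definition min_approx :: "real^'n \<Rightarrow> real \<Rightarrow> real" where
  "min_approx alpha R =
     Min ((\<lambda>r::int^'n. dist_int (\<Sum>i\<in>UNIV. of_int (r $ i) * alpha $ i))
          ` {r. r \<noteq> 0 \<and> (\<forall>i. 0 \<le> r $ i \<and> real_of_int (r $ i) \<le> R)})"

definition E_plus :: "real \<Rightarrow> (real^'n) set" where
  "E_plus omega = {alpha \<in> K_set.
     ((\<lambda>R. R powr omega * min_approx alpha R) \<longlongrightarrow> 0) at_top}"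

end

theory Submission
  imports Defs
begin

lemma dist_int_round: "dist_int x = \<bar>x - of_int (round x)\<bar>"
  unfolding dist_int_def
  by (rule cInf_eq_minimum) (auto intro: round_diff_minimal)

lemma finite_box_int:
  "finite {r::int^'n. \<forall>i. 0 \<le> r$i \<and> real_of_int (r$i) \<le> R}"
proof (rule finite_subset)
  show "{r::int^'n. \<forall>i. 0 \<le> r$i \<and> real_of_int (r$i) \<le> R}
        \<subseteq> vec_lambda ` (UNIV \<rightarrow>\<^sub>E {0..\<lceil>R\<rceil>})"
  proof
    fix r :: "int^'n" assume r: "r \<in> {r::int^'n. \<forall>i. 0 \<le> r$i \<and> real_of_int (r$i) \<le> R}"
    have "(\<lambda>i. r$i) \<in> (UNIV \<rightarrow>\<^sub>E {0..\<lceil>R\<rceil>})"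
    proof -
      have "r$i \<le> \<lceil>R\<rceil>" for i
        using r le_of_int_ceiling[of R] by (smt (verit) mem_Collect_eq of_int_le_iff)
      then show ?thesis using r by auto
    qed
    then show "r \<in> vec_lambda ` (UNIV \<rightarrow>\<^sub>E {0..\<lceil>R\<rceil>})"
      by (intro image_eqI[where x="\<lambda>i. r$i"]) (auto simp: vec_lambda_eta)
  qed
  show "finite (vec_lambda ` (UNIV \<rightarrow>\<^sub>E {0..\<lceil>R\<rceil>}) :: (int^'n) set)"
    by (intro finite_imageI finite_PiE) auto
qed

lemma finite_box_real:
  "finite {p::real^'n. int_vec p \<and> (\<forall>i. \<bar>p$i\<bar> \<le> B)}"
proof (rule finite_subset)
  show "{p::real^'n. int_vec p \<and> (\<forall>i. \<bar>p$i\<bar> \<le> B)}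
        \<subseteq> (\<lambda>f. \<chi> i. real_of_int (f i)) ` (UNIV \<rightarrow>\<^sub>E {-\<lceil>B\<rceil>..\<lceil>B\<rceil>})"
  proof
    fix p :: "real^'n" assume p: "p \<in> {p::real^'n. int_vec p \<and> (\<forall>i. \<bar>p$i\<bar> \<le> B)}"
    have pi: "real_of_int \<lfloor>p$i\<rfloor> = p$i" for i
    proof -
      have "p$i \<in> \<int>" using p by (auto simp: int_vec_def)
      then obtain n where "p$i = of_int n" by (auto elim: Ints_cases)
      then show ?thesis by simp
    qed
    have fin: "(\<lambda>i. \<lfloor>p$i\<rfloor>) \<in> (UNIV \<rightarrow>\<^sub>E {-\<lceil>B\<rceil>..\<lceil>B\<rceil>})"
    proof -
      have "-\<lceil>B\<rceil> \<le> \<lfloor>p$i\<rfloor> \<and> \<lfloor>p$i\<rfloor> \<le> \<lceil>B\<rceil>" for i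
      proof -
        have "\<bar>p$i\<bar> \<le> B" using p by auto
        then have "-B \<le> real_of_int \<lfloor>p$i\<rfloor> \<and> real_of_int \<lfloor>p$i\<rfloor> \<le> B" using pi[of i] by auto
        then show ?thesis by (smt (verit) ceiling_correct of_int_le_iff of_int_minus)
      qed
      then show ?thesis by auto
    qed
    moreover have peq: "p = (\<chi> i. real_of_int (\<lfloor>p$i\<rfloor>))"
      unfolding vec_eq_iff using pi by (metis vec_lambda_beta)
    show "p \<in> (\<lambda>f. \<chi> i. real_of_int (f i)) ` (UNIV \<rightarrow>\<^sub>E {-\<lceil>B\<rceil>..\<lceil>B\<rceil>})"
      apply (rule image_eqI[where x="\<lambda>i. \<lfloor>p$i\<rfloor>"])
      using peq apply simp
      using fin by simp
  qed
  show "finite ((\<lambda>f. \<chi> i. real_of_int (f i)) ` (UNIV \<rightarrow>\<^sub>E {-\<lceil>B\<rceil>..\<lceil>B\<rceil>}) :: (real^'n) set)"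
    by (intro finite_imageI finite_PiE) auto
qed


lemma core_contra:
  fixes x :: "real^'n" and r :: "int^'n"
  assumes x: "\<forall>i. 1/2 < x$i \<and> x$i < 3/2"
    and r0: "r \<noteq> 0" and r: "\<forall>i. 0 \<le> r$i \<and> real_of_int (r$i) \<le> R"
    and R: "R = P / (4 * real CARD('n))" and P: "P \<ge> 1"
    and T: "(\<Sum>i\<in>UNIV. real_of_int (r$i) * x$i) = P * k + e"
    and k: "k \<in> \<int>" and e: "\<bar>e\<bar> < 1/4"
  shows False
proof -
  define T where "T = (\<Sum>i\<in>UNIV. real_of_int (r$i) * x$i)"
  obtain j where j: "r$j \<noteq> 0" using r0 by (auto simp: vec_eq_iff)
  have rj: "r$j \<ge> 1" using j r by (metis int_one_le_iff_zero_less order_le_less)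
  have nn: "\<forall>i\<in>UNIV. 0 \<le> real_of_int (r$i) * x$i" using r x
    by (metis less_le_not_le mult_nonneg_nonneg of_int_0_le_iff order.strict_trans zero_less_divide_1_iff zero_less_numeral)
  have "real_of_int (r$j) * x$j \<le> T" unfolding T_def
    by (rule member_le_sum[where f="\<lambda>i. real_of_int (r$i) * x$i"]) (use nn in auto)
  moreover have "real_of_int (r$j) * x$j \<ge> 1 * (1/2)"
    using rj x by (intro mult_mono) (auto simp: less_imp_le)
  ultimately have Tlo: "T \<ge> 1/2" by simp
  have "T \<le> (\<Sum>i\<in>(UNIV::'n set). R * (3/2))" unfolding T_def
  proof (rule sum_mono)
    fix i :: 'n
    have h: "0 \<le> x$i" "x$i \<le> 3/2" "0 \<le> real_of_int (r$i)" "real_of_int (r$i) \<le> R"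
      using r x[rule_format, of i] by auto
    show "real_of_int (r$i) * x$i \<le> R * (3/2)"
      using h by (intro mult_mono) auto
  qed
  also have "\<dots> = real CARD('n) * R * (3/2)" by simp
  also have "\<dots> = 3/8 * P" using R by simp
  finally have Thi: "T \<le> 3/8 * P" .
  have TT: "T = P * k + e" using T by (simp add: T_def)
  have ee: "-1/4 < e" "e < 1/4" using e by auto
  show False
  proof (cases "k = 0")
    case True then show ?thesis using TT Tlo e by auto
  next
    case False
    then have "\<bar>k\<bar> \<ge> 1" using k Ints_nonzero_abs_ge1 by blast
    then have "k \<ge> 1 \<or> k \<le> -1" by auto
    then show ?thesis
    proof
      assume "k \<ge> 1"
      then have "P * k \<ge> P * 1" using P by (intro mult_left_mono) auto
      then show False using TT Thi ee P by linarith
    next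
      assume "k \<le> -1"
      then have "P * k \<le> P * (-1)" using P by (intro mult_left_mono) auto
      then show False using TT Tlo ee P by linarith
    qed
  qed
qed

theorem lemma7:
  fixes eta :: real
  assumes "CARD('n::finite) \<ge> 2"
    and "0 < eta" and "eta < 1 / real CARD('n)"
  shows "(E_plus (1 + 1 / eta) :: (real^'n) set)
           \<subseteq> (UNIV - D_eta eta) - (UNIV - K_set)"
proof
  fix \<alpha> :: "real^'n"
  assume aE: "\<alpha> \<in> E_plus (1 + 1/eta)"
  define \<omega> where "\<omega> = 1 + 1/eta"
  define d where "d = real CARD('n)"
  define K where "K = 1/(4*d)"
  have d1: "d \<ge> 2" using assms(1) by (simp add: d_def)
  have Kpos: "K > 0" using d1 by (simp add: K_def)
  have aK: "\<alpha> \<in> K_set" and lim: "((\<lambda>R. R powr \<omega> * min_approx \<alpha> R) \<longlongrightarrow> 0) at_top"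
    using aE by (auto simp: E_plus_def \<omega>_def)
  have eps: "K powr \<omega> / 4 > 0" using Kpos by simp
  from tendstoD[OF lim eps] obtain R0 where
    R0: "\<And>R. R \<ge> R0 \<Longrightarrow> \<bar>R powr \<omega> * min_approx \<alpha> R\<bar> < K powr \<omega> / 4"
    by (auto simp: eventually_at_top_linorder dist_real_def)
  define Q0 where "Q0 = (max R0 1 / K) powr (1/eta)"
  have Q0nn: "Q0 \<ge> 0" by (simp add: Q0_def)
  define y :: "real^'n" where "y = (\<chi> i. 1)"
  define S where "S = {(real_of_int \<bar>q\<bar> powr eta) *\<^sub>R (of_int q *\<^sub>R \<alpha> - p)
                   | q p. q \<noteq> 0 \<and> int_vec p}"
  have key: "dist ((real_of_int \<bar>q\<bar> powr eta) *\<^sub>R (of_int q *\<^sub>R \<alpha> - p)) y \<ge> 1/2"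
    if q: "q \<noteq> 0" and p: "int_vec p" and qQ: "real_of_int \<bar>q\<bar> \<ge> Q0" for q p
  proof (rule ccontr)
    define Q where "Q = real_of_int \<bar>q\<bar>"
    define x where "x = (real_of_int \<bar>q\<bar> powr eta) *\<^sub>R (of_int q *\<^sub>R \<alpha> - p)"
    assume "\<not> ?thesis"
    then have dx: "dist x y < 1/2" by (simp add: x_def)
    have xi: "\<forall>i. 1/2 < x$i \<and> x$i < 3/2"
    proof
      fix i
      have "\<bar>x$i - 1\<bar> \<le> dist x y" unfolding dist_norm
        using component_le_norm_cart[of "x - y" i] by (simp add: y_def)
      then show "1/2 < x$i \<and> x$i < 3/2" using dx by auto
    qed
    have Q1: "Q \<ge> 1" using q by (simp add: Q_def)
    define P where "P = Q powr eta"
    have P1: "P \<ge> 1" using Q1 assms(2) by (simp add: P_def ge_one_powr_ge_zero)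
    have PQ0: "P \<ge> max R0 1 / K"
    proof -
      have "Q0 powr eta \<le> Q powr eta" using qQ assms(2) Q0nn by (intro powr_mono2) (auto simp: Q_def)
      moreover have "Q0 powr eta = max R0 1 / K" unfolding Q0_def using assms(2) Kpos
        by (simp add: powr_powr)
      ultimately show ?thesis by (simp add: P_def)
    qed
    define R where "R = K * P"
    have RR0: "R \<ge> R0" "R \<ge> 1" using PQ0 Kpos by (auto simp: R_def field_simps)
    define Rs where "Rs = {r::int^'n. r \<noteq> 0 \<and> (\<forall>i. 0 \<le> r$i \<and> real_of_int (r$i) \<le> R)}"
    have finRs: "finite Rs" by (rule finite_subset[OF _ finite_box_int[of R]]) (auto simp: Rs_def)
    have neRs: "(\<chi> i. 1) \<in> Rs" using RR0 by (auto simp: Rs_def vec_eq_iff)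
    define f where "f = (\<lambda>r::int^'n. dist_int (\<Sum>i\<in>UNIV. of_int (r$i) * \<alpha>$i))"
    have "min_approx \<alpha> R \<in> f ` Rs" unfolding min_approx_def f_def[symmetric] Rs_def[symmetric]
      by (rule Min_in) (use finRs neRs in auto)
    then obtain r where rRs: "r \<in> Rs" and mr: "min_approx \<alpha> R = f r" by auto
    define a where "a = (\<Sum>i\<in>UNIV. of_int (r$i) * \<alpha>$i)"
    define \<delta> where "\<delta> = a - of_int (round a)"
    have fr: "f r = \<bar>\<delta>\<bar>" by (simp add: f_def a_def[symmetric] \<delta>_def dist_int_round)
    have "\<bar>R powr \<omega> * \<bar>\<delta>\<bar>\<bar> < K powr \<omega> / 4" using R0[OF RR0(1)] mr fr by simp
    then have small1: "R powr \<omega> * \<bar>\<delta>\<bar> < K powr \<omega> / 4" by simp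
    have Rw: "R powr \<omega> = K powr \<omega> * (P * Q)"
    proof -
      have "R powr \<omega> = K powr \<omega> * P powr \<omega>" unfolding R_def using Kpos P1
        by (simp add: powr_mult)
      also have "P powr \<omega> = Q powr (eta * \<omega>)" by (simp add: P_def powr_powr)
      also have "eta * \<omega> = eta + 1" using assms(2) by (simp add: \<omega>_def field_simps)
      also have "Q powr (eta + 1) = P * Q" using Q1 by (simp add: powr_add P_def)
      finally show ?thesis .
    qed
    have small: "P * Q * \<bar>\<delta>\<bar> < 1/4"
    proof -
      have "K powr \<omega> * (P * Q * \<bar>\<delta>\<bar>) < K powr \<omega> * (1/4)"
        using small1 Rw by (simp add: mult.assoc)
      then show ?thesis using Kpos by simp
    qed
    define k where "k = real_of_int q * of_int (round a) - (\<Sum>i\<in>UNIV. of_int (r$i) * p$i)"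
    have kInt: "k \<in> \<int>" using p unfolding k_def int_vec_def
      by (intro Ints_diff Ints_mult Ints_sum) auto
    have T: "(\<Sum>i\<in>UNIV. real_of_int (r$i) * x$i) = P * k + P * (of_int q * \<delta>)"
    proof -
      have "(\<Sum>i\<in>UNIV. real_of_int (r$i) * x$i)
          = (\<Sum>i\<in>UNIV. P * (of_int q * (of_int (r$i) * \<alpha>$i)) - P * (of_int (r$i) * p$i))"
        by (intro sum.cong) (auto simp: x_def P_def Q_def algebra_simps)
      also have "\<dots> = P * (of_int q * a) - P * (\<Sum>i\<in>UNIV. of_int (r$i) * p$i)"
        by (simp add: a_def sum_distrib_left sum_subtractf)
      also have "\<dots> = P * k + P * (of_int q * \<delta>)" by (simp add: k_def \<delta>_def algebra_simps)
      finally show ?thesis .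
    qed
    have e: "\<bar>P * (of_int q * \<delta>)\<bar> < 1/4"
    proof -
      have "\<bar>P * (of_int q * \<delta>)\<bar> = P * Q * \<bar>\<delta>\<bar>" using P1
        by (simp add: abs_mult Q_def)
      then show ?thesis using small by simp
    qed
    have rr: "r \<noteq> 0" "\<forall>i. 0 \<le> r$i \<and> real_of_int (r$i) \<le> R" using rRs by (auto simp: Rs_def)
    have RP: "R = P / (4 * real CARD('n))" by (simp add: R_def K_def d_def)
    show False by (rule core_contra[OF xi rr RP P1 T kInt e])
  qed
  define N where "N = \<lceil>Q0\<rceil>"
  define B where "B = real_of_int N * (\<Sum>i\<in>UNIV. \<bar>\<alpha>$i\<bar>) + 2"
  define F where "F = (\<lambda>(q,p). (real_of_int \<bar>q\<bar> powr eta) *\<^sub>R (of_int q *\<^sub>R \<alpha> - p)) `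
         ({-N..N} \<times> {p::real^'n. int_vec p \<and> (\<forall>i. \<bar>p$i\<bar> \<le> B)})"
  have finF: "finite F" using finite_box_real unfolding F_def by blast
  have sub: "S \<inter> ball y (1/2) \<subseteq> F"
  proof
    fix z assume z: "z \<in> S \<inter> ball y (1/2)"
    then obtain q p where q: "q \<noteq> 0" and p: "int_vec p"
      and zq: "z = (real_of_int \<bar>q\<bar> powr eta) *\<^sub>R (of_int q *\<^sub>R \<alpha> - p)" by (auto simp: S_def)
    have dz: "dist z y < 1/2" using z by (simp add: dist_commute)
    have "real_of_int \<bar>q\<bar> < Q0" using key[OF q p] dz zq by force
    then have qN: "\<bar>q\<bar> \<le> N" unfolding N_def by linarith
    have pB: "\<bar>p$i\<bar> \<le> B" for i
    proof -
      have "\<bar>z$i - 1\<bar> \<le> dist z y" unfolding dist_norm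
        using component_le_norm_cart[of "z - y" i] by (simp add: y_def)
      then have zi: "\<bar>z$i\<bar> < 3/2" using dz by auto
      have G: "real_of_int \<bar>q\<bar> powr eta \<ge> 1" using q assms(2) by (simp add: ge_one_powr_ge_zero)
      have "z$i = real_of_int \<bar>q\<bar> powr eta * (of_int q * \<alpha>$i - p$i)" by (simp add: zq)
      then have "\<bar>z$i\<bar> = real_of_int \<bar>q\<bar> powr eta * \<bar>of_int q * \<alpha>$i - p$i\<bar>" by (simp add: abs_mult)
      also have "\<dots> \<ge> 1 * \<bar>of_int q * \<alpha>$i - p$i\<bar>" using G by (intro mult_right_mono) auto
      finally have d1: "\<bar>of_int q * \<alpha>$i - p$i\<bar> < 3/2" using zi by simp
      have "\<bar>\<alpha>$i\<bar> \<le> (\<Sum>j\<in>UNIV. \<bar>\<alpha>$j\<bar>)"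
        by (rule member_le_sum[where f="\<lambda>j. \<bar>\<alpha>$j\<bar>"]) auto
      moreover have "real_of_int \<bar>q\<bar> \<le> real_of_int N" using qN by simp
      ultimately have "real_of_int \<bar>q\<bar> * \<bar>\<alpha>$i\<bar> \<le> real_of_int N * (\<Sum>j\<in>UNIV. \<bar>\<alpha>$j\<bar>)"
        by (intro mult_mono) auto
      moreover have "\<bar>p$i\<bar> \<le> \<bar>of_int q * \<alpha>$i\<bar> + \<bar>of_int q * \<alpha>$i - p$i\<bar>" by linarith
      ultimately show ?thesis using d1 by (simp add: B_def abs_mult)
    qed
    have "(q,p) \<in> {-N..N} \<times> {p::real^'n. int_vec p \<and> (\<forall>i. \<bar>p$i\<bar> \<le> B)}"
      using qN p pB by auto
    then show "z \<in> F" unfolding F_def zq by (rule rev_image_eqI) simp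
  qed
  have "\<not> y islimpt S"
  proof
    assume "y islimpt S"
    then have "y islimpt S \<inter> ball y (1/2)"
      by (rule islimpt_Int_eventually)
         (auto simp: eventually_at dist_commute intro!: exI[of _ "1/2"])
    then have "y islimpt F" using sub by (rule islimpt_subset)
    then show False using islimpt_finite[OF finF] by blast
  qed
  then have "A_eta eta \<alpha> \<noteq> UNIV" unfolding A_eta_def S_def by blast
  then show "\<alpha> \<in> (UNIV - D_eta eta) - (UNIV - K_set)" using aK by (auto simp: D_eta_def)
qed

end
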